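(* Let $I\subset\mathbb{R}$ be an open interval, $\lambda\in\mathbb{R}$, and let $x_1,x_2,x_3:I\to\mathbb{R}$ be smooth functions with $x_3(u)\neq0$ and $x_3'(u)\neq 0$ for all $u$, such that the curve $\gamma(u)=(x_1(u),x_2(u),x_3(u),\lambda x_3(u))$ is parametrized by arclength. Let $M$ be the knotted sphere with position vector $$X(u,v)=\big(x_1(u),\,x_2(u),\,x_3(u)(\cos v-\lambda\sin v),\,x_3(u)(\sin v+\lambda\cos v)\big).$$ Then the conjugate surface $\widetilde M$, given by the Laplace transform $X_{-1}=X-\frac{1}{\Gamma_{12}^2}X_u$, lies in the rotation plane $\Pi=\{x\in\mathbb{E}^4: x_3=x_4=0\}$.
   Context: For a surface $X(u,v)$ with first fundamental form $E,F,G$, the Christoffel symbols $\Gamma_{ij}^k$ are defined by the Gauss formula: the tangential part of $X_{uv}$ equals $\Gamma_{12}^1X_u+\Gamma_{12}^2X_v$. The Laplace transform $X_{-1}$ of the surface is $X_{-1}=X-X_u/\Gamma_{12}^2$ (defined where $\Gamma_{12}^2\neq0$); for this surface $\Gamma_{12}^2=x_3'/x_3$. *)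

theory Defs
  imports "HOL-Analysis.Analysis"
begin

definition smooth_on :: "real set \<Rightarrow> (real \<Rightarrow> real) \<Rightarrow> bool" where
  "smooth_on I f \<longleftrightarrow> (\<forall>n. \<forall>u\<in>I. ((deriv ^^ n) f) differentiable (at u))"

definition X_u :: "(real \<Rightarrow> real \<Rightarrow> real^4) \<Rightarrow> real \<Rightarrow> real \<Rightarrow> real^4" where
  "X_u X u v = vector_derivative (\<lambda>t. X t v) (at u)"

definition X_v :: "(real \<Rightarrow> real \<Rightarrow> real^4) \<Rightarrow> real \<Rightarrow> real \<Rightarrow> real^4" where
  "X_v X u v = vector_derivative (\<lambda>t. X u t) (at v)"

definition X_uv :: "(real \<Rightarrow> real \<Rightarrow> real^4) \<Rightarrow> real \<Rightarrow> real \<Rightarrow> real^4" where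
  "X_uv X u v = vector_derivative (\<lambda>t. X_u X u t) (at v)"

definition fff_E :: "(real \<Rightarrow> real \<Rightarrow> real^4) \<Rightarrow> real \<Rightarrow> real \<Rightarrow> real" where
  "fff_E X u v = X_u X u v \<bullet> X_u X u v"
definition fff_F :: "(real \<Rightarrow> real \<Rightarrow> real^4) \<Rightarrow> real \<Rightarrow> real \<Rightarrow> real" where
  "fff_F X u v = X_u X u v \<bullet> X_v X u v"
definition fff_G :: "(real \<Rightarrow> real \<Rightarrow> real^4) \<Rightarrow> real \<Rightarrow> real \<Rightarrow> real" where
  "fff_G X u v = X_v X u v \<bullet> X_v X u v"

text \<open>Christoffel symbol Gamma_12^2 from the Gauss formula: the tangential part of X_uv is
  Gamma_12^1 X_u + Gamma_12^2 X_v; taking inner products with X_u, X_v gives the linear system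
  X_uv.X_u = G1 E + G2 F, X_uv.X_v = G1 F + G2 G, whose solution for G2 (Cramer) is below.\<close>
definition christoffel_12_2 :: "(real \<Rightarrow> real \<Rightarrow> real^4) \<Rightarrow> real \<Rightarrow> real \<Rightarrow> real" where
  "christoffel_12_2 X u v =
     (fff_E X u v * (X_uv X u v \<bullet> X_v X u v) - fff_F X u v * (X_uv X u v \<bullet> X_u X u v))
     / (fff_E X u v * fff_G X u v - (fff_F X u v)\<^sup>2)"

definition laplace_minus :: "(real \<Rightarrow> real \<Rightarrow> real^4) \<Rightarrow> real \<Rightarrow> real \<Rightarrow> real^4" where
  "laplace_minus X u v = X u v - (1 / christoffel_12_2 X u v) *\<^sub>R X_u X u v"

end

theory Submission
  imports Defs
begin

lemma vec4 [simp]: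
 "(vector [x,y,z,w] ::('a::zero)^4)$1 = x"
 "(vector [x,y,z,w] ::('a::zero)^4)$2 = y"
 "(vector [x,y,z,w] ::('a::zero)^4)$3 = z"
 "(vector [x,y,z,w] ::('a::zero)^4)$4 = w"
  unfolding vector_def by simp_all

lemma inner4: "(vector [a,b,c,d] :: real^4) \<bullet> vector [a',b',c',d'] = a*a'+b*b'+c*c'+d*d'"
  by (simp add: inner_vec_def sum_4)

lemma vd4:
  assumes "(a has_real_derivative a') (at u)" "(b has_real_derivative b') (at u)"
          "(c has_real_derivative c') (at u)" "(d has_real_derivative d') (at u)"
  shows "((\<lambda>t. vector [a t, b t, c t, d t] :: real^4) has_vector_derivative vector [a',b',c',d']) (at u)"
proof -
  have eq: "(\<lambda>t. vector [a t, b t, c t, d t] :: real^4) = (\<lambda>t. a t *\<^sub>R vector[1,0,0,0] + b t *\<^sub>R vector[0,1,0,0]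
      + c t *\<^sub>R vector[0,0,1,0] + d t *\<^sub>R vector[0,0,0,1])"
    by (rule ext) (simp add: vec_eq_iff forall_4)
  have eq2: "(vector [a',b',c',d'] :: real^4) = a' *\<^sub>R vector[1,0,0,0] + b' *\<^sub>R vector[0,1,0,0]
      + c' *\<^sub>R vector[0,0,1,0] + d' *\<^sub>R vector[0,0,0,1]"
    by (simp add: vec_eq_iff forall_4)
  show ?thesis
    unfolding eq eq2
    by (intro has_vector_derivative_add bounded_linear.has_vector_derivative[OF bounded_linear_scaleR_left]
       assms[unfolded has_real_derivative_iff_has_vector_derivative])
qed

theorem proposition9:
  fixes I :: "real set" and lam :: real and x1 x2 x3 :: "real \<Rightarrow> real"
  assumes I: "open I" "is_interval I" "I \<noteq> {}"
    and smooth: "smooth_on I x1" "smooth_on I x2" "smooth_on I x3"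
    and nz: "\<forall>u\<in>I. x3 u \<noteq> 0" and dnz: "\<forall>u\<in>I. deriv x3 u \<noteq> 0"
    and arclength: "\<forall>u\<in>I. norm (vector_derivative
                      (\<lambda>t. vector [x1 t, x2 t, x3 t, lam * x3 t] :: real^4) (at u)) = 1"
  shows "\<forall>u\<in>I. \<forall>v.
     (let X = (\<lambda>u v. vector [x1 u, x2 u, x3 u * (cos v - lam * sin v),
                               x3 u * (sin v + lam * cos v)] :: real^4)
      in christoffel_12_2 X u v \<noteq> 0 \<and>
         laplace_minus X u v $ 3 = 0 \<and> laplace_minus X u v $ 4 = 0)"
proof (intro ballI allI)
  fix u v assume u: "u \<in> I"
  define X where "X = (\<lambda>u v. vector [x1 u, x2 u, x3 u * (cos v - lam * sin v),
                               x3 u * (sin v + lam * cos v)] :: real^4)"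
  define d1 where "d1 = deriv x1 u"
  define d2 where "d2 = deriv x2 u"
  define d3 where "d3 = deriv x3 u"
  have dif: "x1 differentiable (at u)" "x2 differentiable (at u)" "x3 differentiable (at u)"
    using smooth u unfolding smooth_on_def by (metis funpow_0)+
  have D1: "(x1 has_real_derivative d1) (at u)" unfolding d1_def
    using dif(1) DERIV_deriv_iff_real_differentiable by blast
  have D2: "(x2 has_real_derivative d2) (at u)" unfolding d2_def
    using dif(2) DERIV_deriv_iff_real_differentiable by blast
  have D3: "(x3 has_real_derivative d3) (at u)" unfolding d3_def
    using dif(3) DERIV_deriv_iff_real_differentiable by blast
  have x3nz: "x3 u \<noteq> 0" and d3nz: "d3 \<noteq> 0" using nz dnz u d3_def by auto
  have arc: "vector_derivative (\<lambda>t. vector [x1 t, x2 t, x3 t, lam * x3 t] :: real^4) (at u)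
      = vector [d1, d2, d3, lam * d3]"
    by (rule vector_derivative_at, rule vd4[OF D1 D2 D3]) (auto intro!: derivative_eq_intros D3)
  have "norm (vector [d1, d2, d3, lam * d3] :: real^4) = 1" using arclength u arc by auto
  hence "(vector [d1, d2, d3, lam * d3] :: real^4) \<bullet> vector [d1, d2, d3, lam * d3] = 1"
    by (metis power2_norm_eq_inner power_one)
  hence arc1: "d1*d1 + d2*d2 + d3*d3 + (lam*d3)*(lam*d3) = 1" by (simp add: inner4)
  have Xu: "X_u X u t = vector [d1, d2, d3 * (cos t - lam * sin t), d3 * (sin t + lam * cos t)]" for t
    unfolding X_u_def X_def
    by (rule vector_derivative_at, rule vd4[OF D1 D2]) (auto intro!: derivative_eq_intros D3)
  have Xv: "X_v X u v = vector [0, 0, x3 u * (- sin v - lam * cos v), x3 u * (cos v - lam * sin v)]"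
    unfolding X_v_def X_def
    by (rule vector_derivative_at, rule vd4) (auto intro!: derivative_eq_intros)
  have Xuv: "X_uv X u v = vector [0, 0, d3 * (- sin v - lam * cos v), d3 * (cos v - lam * sin v)]"
    unfolding X_uv_def Xu
    by (rule vector_derivative_at, rule vd4) (auto intro!: derivative_eq_intros)
  have sc: "sin v * sin v + cos v * cos v = 1" by (metis sin_cos_squared_add power2_eq_square)
  have E: "fff_E X u v = 1"
  proof -
    have "fff_E X u v = d1*d1+d2*d2+(d3*d3 + (lam*d3)*(lam*d3))*(sin v * sin v+cos v * cos v)"
      unfolding fff_E_def Xu inner4 by algebra
    thus ?thesis using sc arc1 by simp
  qed
  have F: "fff_F X u v = 0" unfolding fff_F_def Xu Xv inner4 by algebra
  have G: "fff_G X u v = x3 u * x3 u * (1 + lam*lam)"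
  proof -
    have "fff_G X u v = x3 u * x3 u * (1 + lam*lam) * (sin v * sin v+cos v * cos v)"
      unfolding fff_G_def Xv inner4 by algebra
    thus ?thesis using sc by simp
  qed
  have A: "X_uv X u v \<bullet> X_v X u v = x3 u * d3 * (1 + lam*lam)"
  proof -
    have "X_uv X u v \<bullet> X_v X u v = x3 u * d3 * (1 + lam*lam) * (sin v * sin v+cos v * cos v)"
      unfolding Xuv Xv inner4 by algebra
    thus ?thesis using sc by simp
  qed
  have lpos: "1 + lam*lam \<noteq> 0" by (smt (verit) zero_le_square)
  have C: "christoffel_12_2 X u v = d3 / x3 u"
    proof -
    have "christoffel_12_2 X u v = (x3 u * d3 * (1+lam*lam)) / (x3 u * x3 u * (1+lam*lam))"
      unfolding christoffel_12_2_def E F G A by simp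
    also have "\<dots> = d3 / x3 u" using x3nz lpos by (simp add: divide_simps)
    finally show ?thesis .
  qed
  have L: "laplace_minus X u v = X u v - (x3 u / d3) *\<^sub>R X_u X u v"
    unfolding laplace_minus_def C by simp
  have "christoffel_12_2 X u v \<noteq> 0 \<and> laplace_minus X u v $ 3 = 0 \<and> laplace_minus X u v $ 4 = 0"
    unfolding C L Xu using x3nz d3nz by (simp add: X_def)
  thus "let X = (\<lambda>u v. vector [x1 u, x2 u, x3 u * (cos v - lam * sin v),
                               x3 u * (sin v + lam * cos v)] :: real^4)
      in christoffel_12_2 X u v \<noteq> 0 \<and>
         laplace_minus X u v $ 3 = 0 \<and> laplace_minus X u v $ 4 = 0" unfolding X_def Let_def .
qed
end
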